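(* Let $(X,\beta,m)$ be a non-atomic standard probability space and $\tau$ an ergodic invertible measure-preserving map of $X$. Let $(\epsilon_n)_{n\ge1}$ be a sequence with $0<\epsilon_n<1/2$ for all $n$ and $\epsilon_n$ decreasing to $0$. Then there exists $E\in\beta$ with $m(E)>0$ such that $$m\Big(\bigcup_{k=1}^n\tau^k(E)\Big)\le1-\epsilon_n\quad\text{for all }n\ge1.$$ *)

theory Defs
  imports "HOL-Probability.Probability"
begin

definition standard_prob_space :: "('a::polish_space) measure \<Rightarrow> bool" where
  "standard_prob_space M \<longleftrightarrow> prob_space M \<and> sets M = sets borel"

definition non_atomic :: "'a measure \<Rightarrow> bool" where
  "non_atomic M \<longleftrightarrow> (\<forall>A\<in>sets M. measure M A > 0 \<longrightarrow>
      (\<exists>B\<in>sets M. B \<subseteq> A \<and> 0 < measure M B \<and> measure M B < measure M A))"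

definition measure_preserving :: "'a measure \<Rightarrow> ('a \<Rightarrow> 'a) \<Rightarrow> bool" where
  "measure_preserving M T \<longleftrightarrow> T \<in> measurable M M \<and>
      (\<forall>A\<in>sets M. emeasure M (T -` A \<inter> space M) = emeasure M A)"

definition invertible_mpt :: "'a measure \<Rightarrow> ('a \<Rightarrow> 'a) \<Rightarrow> bool" where
  "invertible_mpt M T \<longleftrightarrow> bij_betw T (space M) (space M) \<and> measure_preserving M T \<and>
      measure_preserving M (the_inv_into (space M) T)"

definition ergodic :: "'a measure \<Rightarrow> ('a \<Rightarrow> 'a) \<Rightarrow> bool" where
  "ergodic M T \<longleftrightarrow> (\<forall>A\<in>sets M. T -` A \<inter> space M = A \<longrightarrow>
      measure M A = 0 \<or> measure M A = 1)"

end

theory Submission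
  imports Defs
begin

lemma small_sets:
  assumes P: "prob_space M" and na: "non_atomic M" and eta: "\<eta> > 0"
  shows "\<exists>A\<in>sets M. 0 < measure M A \<and> measure M A < \<eta>"
proof -
  interpret prob_space M by (rule P)
  have "\<exists>A\<in>sets M. 0 < measure M A \<and> measure M A \<le> (1/2::real)^k" for k
  proof (induction k)
    case 0 then show ?case using prob_space by (intro bexI[of _ "space M"]) auto
  next
    case (Suc k)
    then obtain A where A: "A \<in> sets M" "0 < measure M A" "measure M A \<le> (1/2::real)^k" by blast
    then obtain B where B: "B \<in> sets M" "B \<subseteq> A" "0 < measure M B" "measure M B < measure M A"
      using na unfolding non_atomic_def by blast
    have D: "measure M (A - B) = measure M A - measure M B" using finite_measure_Diff A B by simp
    show ?case
    proof (cases "measure M B \<le> measure M A / 2")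
      case True then show ?thesis using A B by (intro bexI[of _ B]) auto
    next
      case False then show ?thesis using A B D by (intro bexI[of _ "A - B"]) auto
    qed
  qed
  moreover obtain k where "(1/2::real)^k < \<eta>" using real_arch_pow_inv[of \<eta> "1/2"] eta by auto
  ultimately show ?thesis by (meson le_less_trans)
qed

locale erg = prob_space M for M :: "'a measure" +
  fixes T :: "'a \<Rightarrow> 'a"
  assumes sp: "space M = UNIV"
    and Tm: "T \<in> measurable M M"
    and pres: "\<And>B. B \<in> sets M \<Longrightarrow> measure M (T -` B) = measure M B"
    and erg: "\<And>B. B \<in> sets M \<Longrightarrow> T -` B = B \<Longrightarrow> measure M B = 0 \<or> measure M B = 1"
    and small: "\<And>\<eta>. \<eta> > 0 \<Longrightarrow> \<exists>A\<in>sets M. 0 < measure M A \<and> measure M A < \<eta>"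
begin

lemma Tn_meas: "T ^^ n \<in> measurable M M"
  by (induction n) (auto intro: measurable_compose[OF _ Tm])

lemma pre_sets: "B \<in> sets M \<Longrightarrow> (T ^^ n) -` B \<in> sets M"
  using measurable_sets[OF Tn_meas, of B n] sp by simp

lemma pre1_sets: "B \<in> sets M \<Longrightarrow> T -` B \<in> sets M"
  using measurable_sets[OF Tm, of B] sp by simp

lemma pres_n: "B \<in> sets M \<Longrightarrow> measure M ((T ^^ n) -` B) = measure M B"
proof (induction n)
  case (Suc n)
  have "(T ^^ Suc n) -` B = T -` ((T ^^ n) -` B)" by (simp only: funpow_Suc_right vimage_comp)
  then show ?case using Suc pres pre_sets by (simp del: funpow.simps)
qed simp

lemma mUNIV: "measure M UNIV = 1" using prob_space sp by simp

definition Z :: "'a set \<Rightarrow> nat \<Rightarrow> 'a set" where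
  "Z A m = {x. \<forall>i\<in>{1..m}. (T ^^ i) x \<notin> A}"

lemma Z_sets: "A \<in> sets M \<Longrightarrow> Z A m \<in> sets M"
proof -
  assume A: "A \<in> sets M"
  have "Z A m = UNIV - (\<Union>i\<in>{1..m}. (T ^^ i) -` A)" unfolding Z_def by auto
  also have "\<dots> \<in> sets M" using A pre_sets sp
    by (metis sets.Diff sets.finite_UN sets.top finite_atLeastAtMost)
  finally show ?thesis .
qed

lemma Z0: "Z A 0 = UNIV" unfolding Z_def by auto

lemma Z_anti: "m \<le> m' \<Longrightarrow> Z A m' \<subseteq> Z A m" unfolding Z_def by auto

lemma Z_step: "Z A m \<subseteq> Z A (Suc m) \<union> (T ^^ Suc m) -` A"
  unfolding Z_def by (auto simp: le_Suc_eq)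

lemma G_step: "A \<in> sets M \<Longrightarrow> measure M (Z A m) \<le> measure M (Z A (m + k)) + real k * measure M A"
proof (induction k)
  case (Suc k)
  have "measure M (Z A (m+k)) \<le> measure M (Z A (Suc (m+k)) \<union> (T ^^ Suc (m+k)) -` A)"
    by (rule finite_measure_mono[OF Z_step], rule sets.Un[OF Z_sets[OF Suc.prems] pre_sets[OF Suc.prems]])
  also have "\<dots> \<le> measure M (Z A (Suc (m+k))) + measure M ((T ^^ Suc (m+k)) -` A)"
    by (rule measure_subadditive[OF Z_sets[OF Suc.prems] pre_sets[OF Suc.prems]], simp_all)
  also have "\<dots> = measure M (Z A (m + Suc k)) + measure M A" using pres_n[OF Suc.prems, of "Suc (m+k)"] by (simp del: funpow.simps)
  finally show ?case using Suc by (simp add: algebra_simps)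
qed simp

lemma Z_stay: "Z A (m + L) \<subseteq> (\<Inter>j\<in>{1..L}. (T ^^ j) -` Z A m)"
proof (intro subsetI INT_I vimageI2)
  fix x j assume x: "x \<in> Z A (m + L)" and j: "j \<in> {1..L}"
  show "(T ^^ j) x \<in> Z A m" unfolding Z_def
  proof clarify
    fix i assume i: "i \<in> {1..m}" "(T ^^ i) ((T ^^ j) x) \<in> A"
    have "(T ^^ i) ((T ^^ j) x) = (T ^^ (i + j)) x" by (simp add: funpow_add)
    with x i j show False unfolding Z_def by auto
  qed
qed

lemma Zinf_null:
  assumes A: "A \<in> sets M" and pos: "measure M A > 0"
  shows "measure M (\<Inter>m. Z A m) = 0"
proof -
  define W where "W = (\<Inter>m. Z A m)"
  have Wd: "W = {x. \<forall>i\<ge>1. (T ^^ i) x \<notin> A}" unfolding W_def Z_def by (auto, fastforce)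
  have Ws: "W \<in> sets M" unfolding W_def using Z_sets[OF A] by auto
  have Wfw: "x \<in> W \<Longrightarrow> T x \<in> W" for x
  proof -
    assume x: "x \<in> W"
    { fix i :: nat assume "i \<ge> 1"
      have "(T ^^ i) (T x) = (T ^^ Suc i) x" by (simp add: funpow_swap1)
      then have "(T ^^ i) (T x) \<notin> A" using x Wd by auto }
    then show ?thesis using Wd by auto
  qed
  define D where "D n = (T ^^ n) -` (A \<inter> W)" for n
  have Dd: "disjoint_family D"
    unfolding disjoint_family_on_def
  proof (intro ballI impI)
    fix n m :: nat assume "n \<noteq> m"
    { fix n m :: nat and x assume nm: "n < m" and x: "x \<in> D n" "x \<in> D m"
      have "(T ^^ n) x \<in> W" "(T ^^ m) x \<in> A" using x unfolding D_def by auto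
      moreover have "(T ^^ m) x = (T ^^ (m - n)) ((T ^^ n) x)"
        using nm by (metis funpow_add le_add_diff_inverse2 less_imp_le comp_apply)
      ultimately have False using Wd nm by auto }
    then show "D n \<inter> D m = {}" using \<open>n \<noteq> m\<close>
      by (metis disjoint_iff linorder_neqE_nat)
  qed
  have Ds: "D n \<in> sets M" for n unfolding D_def using A Ws pre_sets by auto
  have Dm: "measure M (D n) = measure M (A \<inter> W)" for n
    unfolding D_def using pres_n[of "A \<inter> W" n] A Ws by (simp only: sets.Int)
  have AW0: "measure M (A \<inter> W) = 0"
  proof (rule ccontr)
    assume ne: "measure M (A \<inter> W) \<noteq> 0"
    then have p: "measure M (A \<inter> W) > 0" using measure_nonneg by (metis less_eq_real_def)
    obtain K :: nat where K: "real K > 1 / measure M (A \<inter> W)" using reals_Archimedean2 by blast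
    have "measure M (\<Union>i\<in>{..<K}. D i) = (\<Sum>i\<in>{..<K}. measure M (D i))"
      by (rule finite_measure_finite_Union) (use Ds Dd in \<open>auto simp: disjoint_family_on_def\<close>)
    also have "\<dots> = real K * measure M (A \<inter> W)" using Dm by simp
    also have "\<dots> > 1" using K p by (simp add: field_simps)
    finally have "measure M (\<Union>i\<in>{..<K}. D i) > 1" .
    moreover have "measure M (\<Union>i\<in>{..<K}. D i) \<le> 1" using mUNIV sp
      by (metis prob_le_1)
    ultimately show False by simp
  qed
  define Y where "Y = (\<Union>n. (T ^^ n) -` W)"
  have Ys: "Y \<in> sets M" unfolding Y_def using Ws pre_sets by auto
  have Yinv: "T -` Y = Y"
  proof
    show "T -` Y \<subseteq> Y" unfolding Y_def
    proof
      fix x assume "x \<in> T -` (\<Union>n. (T ^^ n) -` W)"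
      then obtain n where "(T ^^ n) (T x) \<in> W" by auto
      then have "(T ^^ Suc n) x \<in> W" by (simp only: funpow_Suc_right comp_apply)
      then show "x \<in> (\<Union>n. (T ^^ n) -` W)" by blast
    qed
    show "Y \<subseteq> T -` Y" unfolding Y_def
    proof
      fix x assume "x \<in> (\<Union>n. (T ^^ n) -` W)"
      then obtain n where "(T ^^ n) x \<in> W" by auto
      then have "T ((T ^^ n) x) \<in> W" by (rule Wfw)
      then have "(T ^^ n) (T x) \<in> W" by (metis funpow_swap1)
      then show "x \<in> T -` (\<Union>n. (T ^^ n) -` W)" by auto
    qed
  qed
  have inc: "incseq (\<lambda>n. (T ^^ n) -` W)"
  proof (rule incseq_SucI)
    fix n
    show "(T ^^ n) -` W \<subseteq> (T ^^ Suc n) -` W"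
      using Wfw by auto
  qed
  have "(\<lambda>n. measure M ((T ^^ n) -` W)) \<longlonglongrightarrow> measure M Y"
    unfolding Y_def by (rule finite_Lim_measure_incseq) (use Ws pre_sets inc in auto)
  moreover have "(\<lambda>n. measure M ((T ^^ n) -` W)) = (\<lambda>n. measure M W)" using pres_n Ws by auto
  ultimately have YW: "measure M Y = measure M W" using LIMSEQ_unique tendsto_const by metis
  have "measure M W = 0"
  proof (rule ccontr)
    assume "measure M W \<noteq> 0"
    then have W1: "measure M W = 1" using erg[OF Ys Yinv] YW by simp
    have "measure M (UNIV - W) = 0" using finite_measure_compl[OF Ws] sp W1 mUNIV by simp
    then have "measure M (A - W) = 0"
      using finite_measure_mono[of "A - W" "UNIV - W"] Ws
      by (metis Diff_mono measure_nonneg order_antisym order_refl sets.compl_sets sp subset_UNIV)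
    moreover have "measure M A = measure M (A \<inter> W) + measure M (A - W)"
      using finite_measure_Union[of "A \<inter> W" "A - W"] A Ws by (auto simp: Int_Diff_Un)
    ultimately show False using AW0 pos by simp
  qed
  then show ?thesis unfolding W_def .
qed

lemma INT_sets: "(\<And>j. j \<in> I \<Longrightarrow> X j \<in> sets M) \<Longrightarrow> finite I \<Longrightarrow> (\<Inter>j\<in>I. X j) \<in> sets M"
proof -
  assume X: "\<And>j. j \<in> I \<Longrightarrow> X j \<in> sets M" and f: "finite I"
  have "(\<Inter>j\<in>I. X j) = UNIV - (\<Union>j\<in>I. UNIV - X j)" by auto
  also have "\<dots> \<in> sets M" using X f sp by (metis sets.Diff sets.finite_UN sets.top)
  finally show ?thesis .
qed

lemma key:
  assumes a: "0 < a" "a < 1" and d: "\<delta> > 0"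
  shows "\<exists>C\<in>sets M. measure M C \<le> a + \<delta> \<and> measure M (\<Inter>j\<in>{1..L}. (T ^^ j) -` C) \<ge> a"
proof -
  define \<eta> where "\<eta> = min \<delta> (1 - a) / (real L + 1)"
  have \<eta>pos: "\<eta> > 0" unfolding \<eta>_def using a d by auto
  obtain A where A: "A \<in> sets M" "0 < measure M A" "measure M A < \<eta>" using small[OF \<eta>pos] by blast
  define G where "G m = measure M (Z A m)" for m
  have Gmono: "m \<le> m' \<Longrightarrow> G m' \<le> G m" for m m'
    unfolding G_def by (rule finite_measure_mono[OF Z_anti Z_sets[OF A(1)]])
  have "(\<lambda>m. G m) \<longlonglongrightarrow> measure M (\<Inter>m. Z A m)"
    unfolding G_def by (rule finite_Lim_measure_decseq) (use Z_sets[OF A(1)] Z_anti in \<open>auto simp: decseq_def\<close>)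
  then have "(\<lambda>m. G m) \<longlonglongrightarrow> 0" using Zinf_null[OF A(1,2)] by simp
  then have "eventually (\<lambda>m. G m < a) sequentially" using a by (intro order_tendstoD(2)) auto
  then obtain N where N: "G N < a" by (auto simp: eventually_sequentially)
  define M1 where "M1 = (LEAST m. G m < a)"
  have M1: "G M1 < a" unfolding M1_def by (rule LeastI[of _ N]) (rule N)
  have L\<eta>: "(real L + 1) * \<eta> \<le> min \<delta> (1 - a)" unfolding \<eta>_def by simp
  have "G 0 \<le> G (0 + L) + real L * measure M A" unfolding G_def by (rule G_step[OF A(1)])
  moreover have "G 0 = 1" unfolding G_def Z0 using mUNIV .
  moreover have "real L * measure M A \<le> real L * \<eta>" using A by (simp add: mult_left_mono)
  ultimately have GL: "G L \<ge> a" using L\<eta> \<eta>pos by (simp add: algebra_simps) 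
  have "L < M1"
  proof (rule ccontr)
    assume "\<not> L < M1"
    then have "G L \<le> G M1" using Gmono by simp
    then show False using GL M1 by simp
  qed
  define m0 where "m0 = M1 - Suc L"
  have M1eq: "M1 = m0 + L + 1" using \<open>L < M1\<close> unfolding m0_def by simp
  have Gpre: "G (m0 + L) \<ge> a"
  proof -
    have "m0 + L < M1" using M1eq by simp
    then have "\<not> G (m0 + L) < a" unfolding M1_def by (rule not_less_Least)
    then show ?thesis by simp
  qed
  show ?thesis
  proof (intro bexI conjI)
    show "Z A m0 \<in> sets M" by (rule Z_sets[OF A(1)])
    have "G m0 \<le> G (m0 + Suc L) + real (Suc L) * measure M A" unfolding G_def by (rule G_step[OF A(1)])
    also have "\<dots> \<le> a + real (Suc L) * \<eta>" using M1 M1eq A by (intro add_mono mult_left_mono) auto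
    also have "\<dots> \<le> a + \<delta>" using L\<eta> by (simp add: algebra_simps)
    finally show "measure M (Z A m0) \<le> a + \<delta>" unfolding G_def .
    have "G (m0 + L) \<le> measure M (\<Inter>j\<in>{1..L}. (T ^^ j) -` Z A m0)"
      unfolding G_def by (rule finite_measure_mono[OF Z_stay INT_sets]) (auto intro: pre_sets Z_sets A)
    then show "a \<le> measure M (\<Inter>j\<in>{1..L}. (T ^^ j) -` Z A m0)" using Gpre by simp
  qed
qed

lemma main_erg:
  fixes \<epsilon> :: "nat \<Rightarrow> real"
  assumes e: "\<And>n. n \<ge> 1 \<Longrightarrow> 0 < \<epsilon> n \<and> \<epsilon> n < 1/2"
    and dec: "\<And>n. n \<ge> 1 \<Longrightarrow> \<epsilon> (Suc n) \<le> \<epsilon> n"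
    and lim: "\<epsilon> \<longlonglongrightarrow> 0"
  shows "\<exists>C\<in>sets M. measure M C < 1 \<and> (\<forall>n\<ge>1. measure M (\<Inter>j\<in>{1..n}. (T ^^ j) -` C) \<ge> \<epsilon> n)"
proof -
  define e1 where "e1 = \<epsilon> 1"
  have e1: "0 < e1" "e1 < 1/2" using e[of 1] unfolding e1_def by auto
  define \<delta> where "\<delta> = (1 - 2 * e1) / 4"
  have \<delta>: "\<delta> > 0" unfolding \<delta>_def using e1 by simp
  have le1: "n \<ge> 1 \<Longrightarrow> \<epsilon> n \<le> e1" for n
  proof (induction n rule: dec_induct)
    case base then show ?case unfolding e1_def by simp
  next
    case (step m) then show ?case using dec[of m] by simp
  qed
  have "\<forall>j. \<exists>NC. (\<forall>n\<ge>fst NC. \<epsilon> n < e1 * (1/2)^(Suc j)) \<and> snd NC \<in> sets M \<and>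
      measure M (snd NC) \<le> e1 * (1/2)^j + \<delta> * (1/2)^j \<and>
      measure M (\<Inter>k\<in>{1..fst NC}. (T ^^ k) -` snd NC) \<ge> e1 * (1/2)^j"
  proof
    fix j :: nat
    have pos: "e1 * (1/2)^(Suc j) > 0" using e1 by simp
    have "eventually (\<lambda>n. \<epsilon> n < e1 * (1/2)^(Suc j)) sequentially"
      by (rule order_tendstoD(2)[OF lim pos])
    then obtain N where N: "\<forall>n\<ge>N. \<epsilon> n < e1 * (1/2)^(Suc j)" by (auto simp: eventually_sequentially)
    have a1: "e1 * (1/2)^j < 1"
    proof -
      have "(1/2::real)^j \<le> 1" by (simp add: power_le_one)
      then have "e1 * (1/2)^j \<le> e1 * 1" using e1 by (intro mult_left_mono) auto
      then show ?thesis using e1 by linarith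
    qed
    obtain C where C: "C \<in> sets M" "measure M C \<le> e1 * (1/2)^j + \<delta> * (1/2)^j"
      "measure M (\<Inter>k\<in>{1..N}. (T ^^ k) -` C) \<ge> e1 * (1/2)^j"
      using key[of "e1 * (1/2)^j" "\<delta> * (1/2)^j" N] e1 a1 \<delta> by auto
    show "\<exists>NC. (\<forall>n\<ge>fst NC. \<epsilon> n < e1 * (1/2)^(Suc j)) \<and> snd NC \<in> sets M \<and>
      measure M (snd NC) \<le> e1 * (1/2)^j + \<delta> * (1/2)^j \<and>
      measure M (\<Inter>k\<in>{1..fst NC}. (T ^^ k) -` snd NC) \<ge> e1 * (1/2)^j"
      by (rule exI[of _ "(N, C)"]) (use N C in auto)
  qed
  then obtain NC where NC: "\<And>j. (\<forall>n\<ge>fst (NC j). \<epsilon> n < e1 * (1/2)^(Suc j)) \<and> snd (NC j) \<in> sets M \<and>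
      measure M (snd (NC j)) \<le> e1 * (1/2)^j + \<delta> * (1/2)^j \<and>
      measure M (\<Inter>k\<in>{1..fst (NC j)}. (T ^^ k) -` snd (NC j)) \<ge> e1 * (1/2)^j"
    using choice[of "\<lambda>j NC. (\<forall>n\<ge>fst NC. \<epsilon> n < e1 * (1/2)^(Suc j)) \<and> snd NC \<in> sets M \<and>
      measure M (snd NC) \<le> e1 * (1/2)^j + \<delta> * (1/2)^j \<and>
      measure M (\<Inter>k\<in>{1..fst NC}. (T ^^ k) -` snd NC) \<ge> e1 * (1/2)^j"] by blast
  define Cf where "Cf j = snd (NC j)" for j
  define Nf where "Nf j = fst (NC j)" for j
  have Cfs: "Cf j \<in> sets M" for j using NC unfolding Cf_def by blast
  define C where "C = (\<Union>j. Cf j)"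
  have Cs: "C \<in> sets M" unfolding C_def using Cfs by auto
  have geo: "summable (\<lambda>j. (e1 + \<delta>) * (1/2::real)^j)"
    by (intro summable_mult summable_geometric) simp
  have sum_ge: "(\<Sum>j. (e1 + \<delta>) * (1/2::real)^j) = (e1 + \<delta>) * 2"
    by (simp add: suminf_mult suminf_geometric)
  have bnd: "measure M (Cf j) \<le> (e1 + \<delta>) * (1/2)^j" for j
    using NC[of j] unfolding Cf_def by (simp add: algebra_simps)
  have summ: "summable (\<lambda>j. measure M (Cf j))"
    by (rule summable_comparison_test'[OF geo, of 0]) (use bnd in auto)
  have "measure M C \<le> (\<Sum>j. measure M (Cf j))"
    unfolding C_def by (rule finite_measure_subadditive_countably) (use Cfs summ in auto)
  also have "\<dots> \<le> (\<Sum>j. (e1 + \<delta>) * (1/2::real)^j)" by (rule suminf_le[OF bnd summ geo])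
  also have "\<dots> < 1" unfolding sum_ge using e1 unfolding \<delta>_def by (simp add: field_simps)
  finally have C1: "measure M C < 1" .
  show ?thesis
  proof (intro bexI conjI allI impI)
    show "C \<in> sets M" by (rule Cs)
    show "measure M C < 1" by (rule C1)
    fix n :: nat assume n: "n \<ge> 1"
    have en: "\<epsilon> n > 0" using e[OF n] by simp
    obtain k where k: "(1/2::real)^k < \<epsilon> n / e1" using real_arch_pow_inv[of "\<epsilon> n / e1" "1/2"] en e1 by auto
    have ex: "e1 * (1/2)^(Suc k) < \<epsilon> n"
    proof -
      have "e1 * (1/2)^(Suc k) \<le> e1 * (1/2)^k" using e1 by (intro mult_left_mono) (auto simp: power_decreasing)
      also have "\<dots> < \<epsilon> n" using k e1 by (simp add: field_simps)
      finally show ?thesis .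
    qed
    define j where "j = (LEAST j. e1 * (1/2)^(Suc j) < \<epsilon> n)"
    have jl: "e1 * (1/2)^(Suc j) < \<epsilon> n" unfolding j_def by (rule LeastI[of _ k]) (rule ex)
    have ej: "\<epsilon> n \<le> e1 * (1/2)^j"
    proof (cases j)
      case 0 then show ?thesis using le1[OF n] by simp
    next
      case (Suc j')
      have "\<not> e1 * (1/2)^(Suc j') < \<epsilon> n" unfolding j_def
        by (rule not_less_Least) (use Suc j_def in simp)
      then show ?thesis using Suc by simp
    qed
    have nN: "n \<le> Nf j"
    proof (rule ccontr)
      assume "\<not> n \<le> Nf j"
      then have "\<epsilon> n < e1 * (1/2)^(Suc j)" using NC[of j] unfolding Nf_def by auto
      then show False using jl by simp
    qed
    have "(\<Inter>i\<in>{1..Nf j}. (T ^^ i) -` Cf j) \<subseteq> (\<Inter>i\<in>{1..n}. (T ^^ i) -` C)"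
    proof
      fix x assume x: "x \<in> (\<Inter>i\<in>{1..Nf j}. (T ^^ i) -` Cf j)"
      show "x \<in> (\<Inter>i\<in>{1..n}. (T ^^ i) -` C)"
      proof
        fix i assume "i \<in> {1..n}"
        then have "i \<in> {1..Nf j}" using nN by auto
        then have "(T ^^ i) x \<in> Cf j" using x by blast
        then show "x \<in> (T ^^ i) -` C" unfolding C_def by blast
      qed
    qed
    then have "measure M (\<Inter>i\<in>{1..Nf j}. (T ^^ i) -` Cf j) \<le> measure M (\<Inter>i\<in>{1..n}. (T ^^ i) -` C)"
      by (rule finite_measure_mono[OF _ INT_sets]) (auto intro: pre_sets Cs)
    moreover have "measure M (\<Inter>i\<in>{1..Nf j}. (T ^^ i) -` Cf j) \<ge> e1 * (1/2)^j"
      using NC[of j] unfolding Nf_def Cf_def by blast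
    ultimately show "measure M (\<Inter>i\<in>{1..n}. (T ^^ i) -` C) \<ge> \<epsilon> n" using ej by simp
  qed
qed

end

theorem mainTheorem7:
  fixes M :: "('a::polish_space) measure" and \<tau> :: "'a \<Rightarrow> 'a" and \<epsilon> :: "nat \<Rightarrow> real"
  assumes "standard_prob_space M" and "non_atomic M"
    and "invertible_mpt M \<tau>" and "ergodic M \<tau>"
    and "\<And>n. n \<ge> 1 \<Longrightarrow> 0 < \<epsilon> n \<and> \<epsilon> n < 1/2"
    and "\<And>n. n \<ge> 1 \<Longrightarrow> \<epsilon> (Suc n) \<le> \<epsilon> n"
    and "\<epsilon> \<longlonglongrightarrow> 0"
  shows "\<exists>E\<in>sets M. measure M E > 0 \<and>
           (\<forall>n\<ge>1. measure M (\<Union>k\<in>{1..n}. (\<tau> ^^ k) ` E) \<le> 1 - \<epsilon> n)"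
proof -
  have P: "prob_space M" and sM: "sets M = sets borel" using assms(1) unfolding standard_prob_space_def by auto
  have sp: "space M = UNIV" using sets_eq_imp_space_eq[OF sM] by simp
  interpret prob_space M by (rule P)
  define \<sigma> where "\<sigma> = the_inv_into (space M) \<tau>"
  have bij: "bij_betw \<tau> UNIV UNIV" and mp: "measure_preserving M \<sigma>"
    using assms(3) unfolding invertible_mpt_def \<sigma>_def sp by auto
  have st: "\<sigma> (\<tau> x) = x" for x unfolding \<sigma>_def sp
    using bij by (simp add: bij_betw_def the_inv_into_f_f)
  have ts: "\<tau> (\<sigma> y) = y" for y unfolding \<sigma>_def sp
    using bij by (simp add: f_the_inv_into_f_bij_betw)
  have stk: "(\<sigma> ^^ k) ((\<tau> ^^ k) x) = x" for k x
  proof (induction k arbitrary: x)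
    case (Suc k)
    have "(\<sigma> ^^ Suc k) ((\<tau> ^^ Suc k) x) = (\<sigma> ^^ k) (\<sigma> (\<tau> ((\<tau> ^^ k) x)))"
      by (simp only: funpow_Suc_right[of k \<sigma>] funpow.simps(2)[of k \<tau>] comp_apply)
    then show ?case using Suc st by simp
  qed simp
  have tsk: "(\<tau> ^^ k) ((\<sigma> ^^ k) x) = x" for k x
  proof (induction k arbitrary: x)
    case (Suc k)
    have "(\<tau> ^^ Suc k) ((\<sigma> ^^ Suc k) x) = (\<tau> ^^ k) (\<tau> (\<sigma> ((\<sigma> ^^ k) x)))"
      by (simp only: funpow_Suc_right[of k \<tau>] funpow.simps(2)[of k \<sigma>] comp_apply)
    then show ?case using Suc ts by simp
  qed simp
  have \<sigma>m: "\<sigma> \<in> measurable M M" using mp unfolding measure_preserving_def by auto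
  have pres: "measure M (\<sigma> -` B) = measure M B" if "B \<in> sets M" for B
    using mp that sp unfolding measure_preserving_def measure_def by auto
  have ergs: "measure M B = 0 \<or> measure M B = 1" if B: "B \<in> sets M" "\<sigma> -` B = B" for B
  proof -
    have "\<tau> -` B = B"
    proof
      show "\<tau> -` B \<subseteq> B"
      proof
        fix x assume "x \<in> \<tau> -` B"
        then have "\<tau> x \<in> \<sigma> -` B" using B(2) by simp
        then show "x \<in> B" using st by simp
      qed
      show "B \<subseteq> \<tau> -` B"
      proof
        fix x assume "x \<in> B"
        then have "\<sigma> (\<tau> x) \<in> B" using st by simp
        then have "\<tau> x \<in> \<sigma> -` B" by simp
        then show "x \<in> \<tau> -` B" using B(2) by simp
      qed
    qed
    then show ?thesis using assms(4) B(1) sp unfolding ergodic_def by auto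
  qed
  interpret E: erg M \<sigma>
  proof (unfold_locales)
    show "space M = UNIV" by (rule sp)
    show "\<sigma> \<in> M \<rightarrow>\<^sub>M M" by (rule \<sigma>m)
    show "\<And>B. B \<in> sets M \<Longrightarrow> measure M (\<sigma> -` B) = measure M B" by (rule pres)
    show "\<And>B. B \<in> sets M \<Longrightarrow> \<sigma> -` B = B \<Longrightarrow> measure M B = 0 \<or> measure M B = 1" by (rule ergs)
    show "\<And>\<eta>. \<eta> > 0 \<Longrightarrow> \<exists>A\<in>sets M. 0 < measure M A \<and> measure M A < \<eta>"
      by (rule small_sets[OF P assms(2)])
  qed
  obtain C where C: "C \<in> sets M" "measure M C < 1"
    "\<And>n. n \<ge> 1 \<Longrightarrow> measure M (\<Inter>j\<in>{1..n}. (\<sigma> ^^ j) -` C) \<ge> \<epsilon> n"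
    using E.main_erg[OF assms(5,6,7)] by blast
  define E where "E = UNIV - C"
  have Es: "E \<in> sets M" unfolding E_def using C(1) sp by (metis sets.compl_sets)
  have mE: "measure M E = 1 - measure M C" unfolding E_def using finite_measure_compl[OF C(1)] sp E.mUNIV by simp
  show ?thesis
  proof (intro bexI conjI allI impI)
    show "E \<in> sets M" by (rule Es)
    show "measure M E > 0" using mE C(2) by simp
    fix n :: nat assume n: "n \<ge> 1"
    have img: "(\<tau> ^^ k) ` E = UNIV - (\<sigma> ^^ k) -` C" for k
    proof
      show "(\<tau> ^^ k) ` E \<subseteq> UNIV - (\<sigma> ^^ k) -` C" unfolding E_def using stk by auto
      show "UNIV - (\<sigma> ^^ k) -` C \<subseteq> (\<tau> ^^ k) ` E" unfolding E_def
      proof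
        fix y assume "y \<in> UNIV - (\<sigma> ^^ k) -` C"
        then have "(\<sigma> ^^ k) y \<in> UNIV - C" by auto
        then show "y \<in> (\<tau> ^^ k) ` (UNIV - C)" using tsk[of k y] by (metis image_eqI)
      qed
    qed
    define S where "S = (\<Inter>j\<in>{1..n}. (\<sigma> ^^ j) -` C)"
    have Ss: "S \<in> sets M" unfolding S_def by (rule E.INT_sets) (auto intro: E.pre_sets C(1))
    have "(\<Union>k\<in>{1..n}. (\<tau> ^^ k) ` E) = UNIV - S" unfolding S_def img by auto
    then have "measure M (\<Union>k\<in>{1..n}. (\<tau> ^^ k) ` E) = 1 - measure M S"
      using finite_measure_compl[OF Ss] sp E.mUNIV by simp
    then show "measure M (\<Union>k\<in>{1..n}. (\<tau> ^^ k) ` E) \<le> 1 - \<epsilon> n" using C(3)[OF n] unfolding S_def by simp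
  qed
qed

end
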